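(* Let $\rho\in\mathcal{P}(\mathbb{R}^n)\cap L^\infty(\mathbb{R}^n)$ be radially decreasing and let $h$ be its height function. Then: (a) $h(s)\in(0,\|\rho\|_\infty)$ for $s\in(0,1)$, $h$ is continuous, strictly increasing and convex on $(0,1)$, and $h'(s)=|\{\rho>h(s)\}|^{-1}$ for a.e. $s\in(0,1)$. (b) $\rho$ is compactly supported if and only if $\lim_{s\to0^+}h'(s)>0$; moreover $\lim_{s\to0^+}h'(s)=|\mathrm{supp}\,\rho|^{-1}$. (c) For a.e. $x\in\mathbb{R}^n$, $\rho(x)=\int_0^1 \chi_{(c_n h'(s))^{-1/n}}(x)\,h'(s)\,ds$. (d) If in addition $\rho$ is strictly decreasing in the radial variable within its support, then $h\in C^1((0,1))$ and $\lim_{s\to1^-}h'(s)=+\infty$.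
   Context: $\mathcal{P}(\mathbb{R}^n)$ denotes probability densities on $\mathbb{R}^n$. Radially decreasing means radially symmetric about the origin and nonincreasing in $|x|$. The height function $h:(0,1)\to(0,\|\rho\|_\infty)$ of $\rho$ is defined implicitly by $\int_{\mathbb{R}^n}\min\{\rho(x),h(s)\}\,dx=s$. $c_n$ is the volume of the unit ball in $\mathbb{R}^n$, and $\chi_r=1_{B(0,r)}$. *)

theory Defs
  imports "HOL-Analysis.Analysis" "HOL-Probability.Essential_Supremum"
begin

text \<open>Radially decreasing: radially symmetric about the origin and nonincreasing in the norm.
  (The condition below implies radial symmetry.)\<close>
definition radially_decreasing :: "('a::euclidean_space \<Rightarrow> real) \<Rightarrow> bool" where
  "radially_decreasing \<rho> \<longleftrightarrow> (\<forall>x y. norm x \<le> norm y \<longrightarrow> \<rho> y \<le> \<rho> x)"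

definition prob_density :: "('a::euclidean_space \<Rightarrow> real) \<Rightarrow> bool" where
  "prob_density \<rho> \<longleftrightarrow> \<rho> \<in> borel_measurable lborel \<and> (\<forall>x. 0 \<le> \<rho> x)
      \<and> integrable lborel \<rho> \<and> integral\<^sup>L lborel \<rho> = 1"

definition Linf_norm :: "('a::euclidean_space \<Rightarrow> real) \<Rightarrow> ereal" where
  "Linf_norm \<rho> = esssup lborel (\<lambda>x. ereal \<bar>\<rho> x\<bar>)"

definition unit_ball_vol :: "'a::euclidean_space itself \<Rightarrow> real" where
  "unit_ball_vol _ = measure lborel (ball (0::'a) 1)"

definition fsupp :: "('a::euclidean_space \<Rightarrow> real) \<Rightarrow> 'a set" where
  "fsupp \<rho> = closure {x. \<rho> x \<noteq> 0}"

end

theory Submission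
  imports Defs
begin

lemma radial_set:
  fixes U :: "'a::euclidean_space set"
  assumes dc: "\<And>x y. x \<in> U \<Longrightarrow> norm y \<le> norm x \<Longrightarrow> y \<in> U"
  shows "U = UNIV \<or> (\<exists>R\<ge>0. ball 0 R \<subseteq> U \<and> U \<subseteq> cball 0 R)"
proof (cases "bounded U")
  case False
  have "y \<in> U" for y :: 'a
  proof -
    from False obtain x where "x \<in> U" "norm y < norm x" unfolding bounded_iff by (meson not_le)
    then show "y \<in> U" using dc by auto
  qed
  then have "U = UNIV" by auto
  then show ?thesis by simp
next
  case True
  show ?thesis
  proof (cases "U = {}")
    case True then show ?thesis by (intro disjI2 exI[of _ 0]) auto
  next
    case ne: False
    define R where "R = Sup (norm ` U)"
    have bdd: "bdd_above (norm ` U)" using True by (auto simp: bounded_iff bdd_above_def)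
    have up: "U \<subseteq> cball 0 R" using cSup_upper[OF _ bdd] by (auto simp: R_def)
    moreover have "ball 0 R \<subseteq> U"
    proof
      fix y assume "y \<in> ball (0::'a) R"
      then have "norm y < R" by simp
      then obtain x where "x \<in> U" "norm y < norm x" using less_cSup_iff[of "norm ` U"] ne bdd by (auto simp: R_def)
      then show "y \<in> U" using dc by auto
    qed
    moreover have "0 \<le> R"
    proof -
      obtain x where "x \<in> U" using ne by auto
      then show ?thesis using up by (meson mem_cball_0 norm_ge_zero order.trans subsetD)
    qed
    ultimately show ?thesis by blast
  qed
qed

lemma radial_measure:
  fixes U :: "'a::euclidean_space set"
  assumes "ball 0 R \<subseteq> U" "U \<subseteq> cball 0 R" "U \<in> sets lborel" "0 \<le> R"
  shows "emeasure lborel U = ennreal (Ball_Volume.unit_ball_vol (real DIM('a)) * R ^ DIM('a))"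
proof (rule order.antisym)
  show "emeasure lborel U \<le> ennreal (Ball_Volume.unit_ball_vol (real DIM('a)) * R ^ DIM('a))"
    using emeasure_mono[OF assms(2), of lborel] emeasure_cball[OF assms(4), of "0::'a"] by simp
  show "ennreal (Ball_Volume.unit_ball_vol (real DIM('a)) * R ^ DIM('a)) \<le> emeasure lborel U"
    using emeasure_mono[OF assms(1,3)] emeasure_ball[OF assms(4), of "0::'a"] by simp
qed

locale hsetup =
  fixes \<rho> :: "'a::euclidean_space \<Rightarrow> real" and h :: "real \<Rightarrow> real" and M :: real
  assumes meas[measurable]: "\<rho> \<in> borel_measurable lborel"
  and nn: "\<And>x. 0 \<le> \<rho> x"
  and intg: "integrable lborel \<rho>"
  and int1: "integral\<^sup>L lborel \<rho> = 1"
  and Mdef: "esssup lborel (\<lambda>x. ereal (\<rho> x)) = ereal M"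
  and rad: "\<And>x y. norm x \<le> norm y \<Longrightarrow> \<rho> y \<le> \<rho> x"
  and height: "\<And>s. 0 < s \<Longrightarrow> s < 1 \<Longrightarrow> integral\<^sup>L lborel (\<lambda>x. min (\<rho> x) (h s)) = s"
begin

definition "F t = integral\<^sup>L lborel (\<lambda>x. min (\<rho> x) t)"
definition "g t = measure lborel {x. t < \<rho> x}"
definition "G t = measure lborel {x. t \<le> \<rho> x}"

lemma AE_le: "AE x in lborel. \<rho> x \<le> M"
  using esssup_AE[of "\<lambda>x. ereal (\<rho> x)" lborel] Mdef by simp

lemma pos_meas: "t < M \<Longrightarrow> 0 < emeasure lborel {x. t < \<rho> x}"
  using esssup_pos_measure[of "\<lambda>x. ereal (\<rho> x)" lborel "ereal t"] Mdef by simp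

lemma M_pos: "0 < M"
proof (rule ccontr)
  assume A: "\<not> 0 < M"
  have "AE x in lborel. \<rho> x = 0" using AE_le
  proof eventually_elim
    case (elim x) then show ?case using nn[of x] A by linarith
  qed
  then have "integral\<^sup>L lborel \<rho> = integral\<^sup>L lborel (\<lambda>x. 0::real)"
    using integral_cong_AE[of \<rho> lborel "\<lambda>x. 0::real"] by simp
  then show False using int1 by simp
qed

lemma nnint: "(\<integral>\<^sup>+ x. ennreal (\<rho> x) \<partial>lborel) = 1"
  using nn_integral_eq_integral[OF intg] nn int1 by simp

lemma fin_ge: assumes "0 < t" shows "emeasure lborel {x. t \<le> \<rho> x} < \<infinity>"
proof -
  have "ennreal t * emeasure lborel {x. t \<le> \<rho> x} = (\<integral>\<^sup>+ x. ennreal t * indicator {x. t \<le> \<rho> x} x \<partial>lborel)"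
    by (simp add: nn_integral_cmult_indicator)
  also have "\<dots> \<le> (\<integral>\<^sup>+ x. ennreal (\<rho> x) \<partial>lborel)"
    by (intro nn_integral_mono) (auto simp: indicator_def intro: ennreal_leI)
  finally have "ennreal t * emeasure lborel {x. t \<le> \<rho> x} \<le> 1" using nnint by simp
  then show ?thesis using assms
    by (metis ennreal_mult_less_top ennreal_less_top ennreal_one_less_top infinity_ennreal_def
        le_less_trans mult.commute not_less_iff_gr_or_eq ennreal_eq_0_iff ennreal_mult_top top.not_eq_extremum)
qed

lemma fin_gt: assumes "0 < t" shows "emeasure lborel {x. t < \<rho> x} < \<infinity>"
proof -
  have "emeasure lborel {x. t < \<rho> x} \<le> emeasure lborel {x. t \<le> \<rho> x}"
    by (intro emeasure_mono) auto
  then show ?thesis using fin_ge[OF assms] by auto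
qed

lemma minint: assumes "0 \<le> t" shows "integrable lborel (\<lambda>x. min (\<rho> x) t)"
  by (rule Bochner_Integration.integrable_bound[OF intg]) (use assms nn in auto)

lemma F_upper: assumes "0 < t1" "t1 \<le> t2" shows "F t2 - F t1 \<le> (t2 - t1) * g t1"
proof -
  have i1: "integrable lborel (\<lambda>x. min (\<rho> x) t1)" "integrable lborel (\<lambda>x. min (\<rho> x) t2)"
    using assms by (auto intro!: minint)
  have i2: "integrable lborel (\<lambda>x. (t2 - t1) * indicator {x. t1 < \<rho> x} x :: real)"
    using fin_gt[OF assms(1)] by auto
  have "F t2 - F t1 = integral\<^sup>L lborel (\<lambda>x. min (\<rho> x) t2 - min (\<rho> x) t1)"
    unfolding F_def using i1 by simp
  also have "\<dots> \<le> integral\<^sup>L lborel (\<lambda>x. (t2 - t1) * indicator {x. t1 < \<rho> x} x)"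
    using i1 i2 assms by (intro integral_mono) (auto simp: indicator_def)
  also have "\<dots> = (t2 - t1) * g t1" unfolding g_def by simp
  finally show ?thesis .
qed

lemma F_lower: assumes "0 \<le> t1" "t1 \<le> t2" "0 < t2" shows "(t2 - t1) * G t2 \<le> F t2 - F t1"
proof -
  have i1: "integrable lborel (\<lambda>x. min (\<rho> x) t1)" "integrable lborel (\<lambda>x. min (\<rho> x) t2)"
    using assms by (auto intro!: minint)
  have i2: "integrable lborel (\<lambda>x. (t2 - t1) * indicator {x. t2 \<le> \<rho> x} x :: real)"
    using fin_ge[OF assms(3)] by auto
  have "(t2 - t1) * G t2 = integral\<^sup>L lborel (\<lambda>x. (t2 - t1) * indicator {x. t2 \<le> \<rho> x} x)"
    unfolding G_def by simp
  also have "\<dots> \<le> integral\<^sup>L lborel (\<lambda>x. min (\<rho> x) t2 - min (\<rho> x) t1)"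
    using i1 i2 assms nn by (intro integral_mono) (auto simp: indicator_def)
  also have "\<dots> = F t2 - F t1"
    unfolding F_def using i1 by simp
  finally show ?thesis .
qed

lemma F_neg: assumes "t \<le> 0" shows "F t = 0"
proof (cases "t = 0")
  case True then show ?thesis using nn by (simp add: F_def min_absorb2)
next
  case False
  have "\<not> integrable lborel (\<lambda>x::'a. t)"
  proof
    assume "integrable lborel (\<lambda>x::'a. t)"
    from integrableD(3)[OF this] have "(\<integral>\<^sup>+ x. ennreal (- t) \<partial>(lborel::'a measure)) < \<infinity>"
      by (simp add: less_top)
    moreover have "(\<integral>\<^sup>+ x. ennreal (- t) \<partial>(lborel::'a measure)) = ennreal (- t) * \<infinity>"
      by (simp add: nn_integral_const)
    moreover have "ennreal (- t) \<noteq> 0" using False assms by simp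
    ultimately show False using ennreal_mult_top by (metis infinity_ennreal_def less_irrefl)
  qed
  moreover have "(\<lambda>x. min (\<rho> x) t) = (\<lambda>x. t)"
  proof (intro ext)
    fix x show "min (\<rho> x) t = t" using nn[of x] assms by (simp add: min_def)
  qed
  ultimately show ?thesis unfolding F_def by (metis not_integrable_integral_eq)
qed

lemma F_big: assumes "M \<le> t" shows "F t = 1"
proof -
  have "F t = integral\<^sup>L lborel \<rho>" unfolding F_def
    by (rule integral_cong_AE) (use AE_le assms in auto)
  then show ?thesis using int1 by simp
qed

lemma g_le_G: "0 < t \<Longrightarrow> g t \<le> G t"
  unfolding g_def G_def using fin_ge by (intro measure_mono_fmeasurable) (auto simp: fmeasurable_def)

lemma g_pos: "0 < t \<Longrightarrow> t < M \<Longrightarrow> 0 < g t"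
  unfolding g_def using pos_meas fin_gt by (simp add: measure_def enn2real_positive_iff)

lemma G_pos: "0 < t \<Longrightarrow> t < M \<Longrightarrow> 0 < G t"
  using g_pos g_le_G by force

lemma F_mono: assumes a: "0 \<le> t1" "t1 \<le> t2" shows "F t1 \<le> F t2"
proof (cases "t1 = t2")
  case False
  then have "0 < t2" using a by auto
  have "0 \<le> (t2 - t1) * G t2" using a by (intro mult_nonneg_nonneg) (auto simp: G_def)
  then show ?thesis using F_lower[OF a \<open>0 < t2\<close>] by linarith
qed simp

lemma F_strict: assumes "0 \<le> t1" "t1 < t2" "t2 < M" shows "F t1 < F t2"
proof -
  have "0 < (t2 - t1) * G t2" using assms G_pos[of t2] by simp
  then show ?thesis using F_lower[of t1 t2] assms by linarith
qed

lemma Fh: "0 < s \<Longrightarrow> s < 1 \<Longrightarrow> F (h s) = s"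
  using height by (simp add: F_def)

lemma h_range: assumes "0 < s" "s < 1" shows "0 < h s" "h s < M"
proof -
  show "0 < h s" using F_neg[of "h s"] Fh[OF assms] assms by fastforce
  show "h s < M" using F_big[of "h s"] Fh[OF assms] assms by fastforce
qed

lemma F_range: assumes "0 < t" "t < M" shows "0 < F t" "F t < 1"
  using F_strict[of 0 t] F_strict[of t "(t+M)/2"] F_mono[of "(t+M)/2" M] F_neg[of 0] F_big[of M] assms
  by auto

lemma hF: assumes "0 < t" "t < M" shows "h (F t) = t"
proof -
  have *: "F (h (F t)) = F t" using Fh F_range[OF assms] by auto
  have r: "0 < h (F t)" "h (F t) < M" using h_range F_range[OF assms] by auto
  show ?thesis
  proof (rule ccontr)
    assume "h (F t) \<noteq> t"
    then consider "h (F t) < t" | "t < h (F t)" by linarith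
    then show False
      using F_strict[of "h (F t)" t] F_strict[of t "h (F t)"] * r assms by (cases; auto)
  qed
qed

lemma h_strict: assumes "0 < s1" "s1 < s2" "s2 < 1" shows "h s1 < h s2"
proof (rule ccontr)
  assume "\<not> h s1 < h s2"
  then have "F (h s2) \<le> F (h s1)" using F_mono[of "h s2" "h s1"] h_range[of s2] assms by auto
  then show False using Fh[of s1] Fh[of s2] assms by auto
qed

lemma h_image: "h ` {0<..<1} = {0<..<M}"
proof
  show "h ` {0<..<1} \<subseteq> {0<..<M}" using h_range by auto
  show "{0<..<M} \<subseteq> h ` {0<..<1}"
  proof
    fix t assume "t \<in> {0<..<M}"
    then show "t \<in> h ` {0<..<1}" using hF[of t] F_range[of t] by (intro image_eqI[of _ _ "F t"]) auto
  qed
qed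

lemma h_slope: assumes "0 < s1" "s1 < s2" "s2 < 1"
  shows "(s2 - s1) / g (h s1) \<le> h s2 - h s1" "h s2 - h s1 \<le> (s2 - s1) / G (h s2)"
proof -
  have r: "0 < h s1" "h s1 < M" "0 < h s2" "h s2 < M" "h s1 < h s2"
    using h_range[of s1] h_range[of s2] h_strict[OF assms] assms by auto
  have u: "s2 - s1 \<le> (h s2 - h s1) * g (h s1)"
    using F_upper[of "h s1" "h s2"] Fh[of s1] Fh[of s2] r assms by auto
  have l: "(h s2 - h s1) * G (h s2) \<le> s2 - s1"
    using F_lower[of "h s1" "h s2"] Fh[of s1] Fh[of s2] r assms by auto
  show "(s2 - s1) / g (h s1) \<le> h s2 - h s1" using u g_pos[of "h s1"] r by (simp add: divide_le_eq)
  show "h s2 - h s1 \<le> (s2 - s1) / G (h s2)" using l G_pos[of "h s2"] r by (simp add: le_divide_eq)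
qed

lemma G_anti: assumes "0 < t1" "t1 \<le> t2" shows "G t2 \<le> G t1"
  unfolding G_def using fin_ge assms by (intro measure_mono_fmeasurable) (auto simp: fmeasurable_def)

lemma g_anti: assumes "0 < t1" "t1 \<le> t2" shows "g t2 \<le> g t1"
  unfolding g_def using fin_gt assms by (intro measure_mono_fmeasurable) (auto simp: fmeasurable_def)

lemma h_mono: "0 < s1 \<Longrightarrow> s1 \<le> s2 \<Longrightarrow> s2 < 1 \<Longrightarrow> h s1 \<le> h s2"
  using h_strict[of s1 s2] by (cases "s1 = s2") auto

lemma h_lip: assumes "0 < s1" "s1 \<le> s2" "s2 \<le> b" "b < 1"
  shows "h s2 - h s1 \<le> (s2 - s1) * (1 / G (h b))"
proof (cases "s1 = s2")
  case False
  then have lt: "s1 < s2" using assms by auto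
  have r: "0 < h s2" "h s2 \<le> h b" "h b < M" using h_range[of s2] h_range[of b] h_mono[of s2 b] assms lt by auto
  have "0 < G (h b)" using G_pos r by auto
  moreover have "G (h b) \<le> G (h s2)" using G_anti r by auto
  ultimately have "1 / G (h s2) \<le> 1 / G (h b)" by (simp add: frac_le)
  then have "(s2 - s1) * (1 / G (h s2)) \<le> (s2 - s1) * (1 / G (h b))" using lt by (intro mult_left_mono) auto
  then show ?thesis using h_slope(2)[OF assms(1) lt] assms lt by simp
qed simp

lemma h_isCont: assumes "0 < s" "s < 1" shows "isCont h s"
proof -
  define b where "b = (s + 1) / 2"
  define K where "K = 1 / G (h b)"
  have b: "s < b" "b < 1" using assms by (auto simp: b_def)
  have ev: "eventually (\<lambda>x. 0 < x \<and> x < b) (at s)"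
    unfolding eventually_at_topological by (intro exI[of _ "{0<..<b}"]) (use assms b in auto)
  have "eventually (\<lambda>x. h s - K * \<bar>x - s\<bar> \<le> h x) (at s)"
    using ev
  proof eventually_elim
    case (elim x)
    show ?case
    proof (cases "x \<le> s")
      case True then show ?thesis using h_lip[of x s b] elim b assms by (simp add: K_def abs_if)
    next
      case False then show ?thesis using h_mono[of s x] elim b assms
        by (smt (verit, best) K_def G_pos divide_nonneg_pos h_range(1) h_range(2) mult_nonneg_nonneg)
    qed
  qed
  moreover have "eventually (\<lambda>x. h x \<le> h s + K * \<bar>x - s\<bar>) (at s)"
    using ev
  proof eventually_elim
    case (elim x)
    show ?case
    proof (cases "x \<le> s")
      case False then show ?thesis using h_lip[of s x b] elim b assms by (simp add: K_def abs_if)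
    next
      case True then show ?thesis using h_mono[of x s] elim b assms
        by (smt (verit, best) K_def G_pos divide_nonneg_pos h_range(1) h_range(2) mult_nonneg_nonneg)
    qed
  qed
  moreover have "((\<lambda>x. h s - K * \<bar>x - s\<bar>) \<longlongrightarrow> h s) (at s)"
    by (auto intro!: tendsto_eq_intros)
  moreover have "((\<lambda>x. h s + K * \<bar>x - s\<bar>) \<longlongrightarrow> h s) (at s)"
    by (auto intro!: tendsto_eq_intros)
  ultimately have "(h \<longlongrightarrow> h s) (at s)" by (rule tendsto_sandwich)
  then show ?thesis by (simp add: isCont_def)
qed

lemma h_cont: "continuous_on {0<..<1} h"
  using h_isCont by (intro continuous_at_imp_continuous_on) auto

lemma h_convex: "convex_on {0<..<1} h"
proof (rule convex_on_linorderI)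
  show "convex {0<..<1::real}" by simp
  fix t x y :: real
  assume t: "0 < t" "t < 1" and xy: "x \<in> {0<..<1}" "y \<in> {0<..<1}" "x < y"
  define z where "z = (1 - t) * x + t * y"
  have zx: "z - x = t * (y - x)" by (simp add: z_def algebra_simps)
  have yz: "y - z = (1 - t) * (y - x)" by (simp add: z_def algebra_simps)
  have p1: "0 < t * (y - x)" using t xy by auto
  have p2: "0 < (1 - t) * (y - x)" using t xy by auto
  have z1: "x < z" using p1 unfolding zx[symmetric] by simp
  have z2: "z < y" using p2 unfolding yz[symmetric] by simp
  note z = z1 z2
  have r: "0 < h z" "h z < M" using h_range[of z] z xy by auto
  define K1 where "K1 = 1 / G (h z)"
  define K2 where "K2 = 1 / g (h z)"
  have K: "K1 \<le> K2" "0 < K1" unfolding K1_def K2_def using g_pos[OF r] g_le_G[OF r(1)] G_pos[OF r]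
    by (auto simp: frac_le)
  have 1: "h z - h x \<le> t * (y - x) * K1" using h_slope(2)[of x z] z xy zx by (simp add: K1_def)
  have 2: "(1 - t) * (y - x) * K2 \<le> h y - h z" using h_slope(1)[of z y] z xy yz by (simp add: K2_def)
  have "(1 - t) * (h z - h x) \<le> (1 - t) * (t * (y - x) * K1)" using 1 t by (intro mult_left_mono) auto
  also have "\<dots> \<le> (1 - t) * (t * (y - x) * K2)" using K t xy by (intro mult_left_mono) auto
  also have "\<dots> = t * ((1 - t) * (y - x) * K2)" by simp
  also have "\<dots> \<le> t * (h y - h z)" using 2 t by (intro mult_left_mono) auto
  finally have fin: "(1 - t) * (h z - h x) \<le> t * (h y - h z)" .
  have ze: "(1 - t) *\<^sub>R x + t *\<^sub>R y = z" by (simp add: z_def)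
  show "h ((1 - t) *\<^sub>R x + t *\<^sub>R y) \<le> (1 - t) * h x + t * h y"
    unfolding ze using fin by (simp add: algebra_simps)
qed

lemma emeas_right_ge: assumes "0 \<le> t"
  shows "((\<lambda>u. emeasure lborel {x. u \<le> \<rho> x}) \<longlongrightarrow> emeasure lborel {x. t < \<rho> x}) (at_right t)"
proof (rule tendsto_at_right_sequentially[of t "t + 1"])
  fix S :: "nat \<Rightarrow> real" assume S: "\<And>n. t < S n" "decseq S" "S \<longlonglongrightarrow> t"
  have "(\<lambda>n. emeasure lborel {x. S n \<le> \<rho> x}) \<longlonglongrightarrow> emeasure lborel (\<Union>n. {x. S n \<le> \<rho> x})"
    using S(2) by (intro Lim_emeasure_incseq) (auto simp: incseq_def decseq_def intro: order.trans)
  also have "(\<Union>n. {x. S n \<le> \<rho> x}) = {x. t < \<rho> x}"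
  proof safe
    fix x n assume "S n \<le> \<rho> x" then show "t < \<rho> x" using S(1)[of n] by linarith
  next
    fix x assume "t < \<rho> x"
    then have "eventually (\<lambda>n. S n < \<rho> x) sequentially" using S(3) by (intro order_tendstoD(2))
    then obtain n where "S n < \<rho> x" by (auto dest: eventually_happens)
    then show "x \<in> (\<Union>n. {x. S n \<le> \<rho> x})" using less_imp_le by blast
  qed
  finally show "(\<lambda>n. emeasure lborel {x. S n \<le> \<rho> x}) \<longlonglongrightarrow> emeasure lborel {x. t < \<rho> x}" .
qed simp

lemma emeas_right_gt: assumes "0 \<le> t"
  shows "((\<lambda>u. emeasure lborel {x. u < \<rho> x}) \<longlongrightarrow> emeasure lborel {x. t < \<rho> x}) (at_right t)"
proof (rule tendsto_at_right_sequentially[of t "t + 1"])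
  fix S :: "nat \<Rightarrow> real" assume S: "\<And>n. t < S n" "decseq S" "S \<longlonglongrightarrow> t"
  have "(\<lambda>n. emeasure lborel {x. S n < \<rho> x}) \<longlonglongrightarrow> emeasure lborel (\<Union>n. {x. S n < \<rho> x})"
    using S(2) by (intro Lim_emeasure_incseq) (auto simp: incseq_def decseq_def intro: le_less_trans)
  also have "(\<Union>n. {x. S n < \<rho> x}) = {x. t < \<rho> x}"
  proof safe
    fix x n assume "S n < \<rho> x" then show "t < \<rho> x" using S(1)[of n] by linarith
  next
    fix x assume "t < \<rho> x"
    then have "eventually (\<lambda>n. S n < \<rho> x) sequentially" using S(3) by (intro order_tendstoD(2))
    then obtain n where "S n < \<rho> x" by (auto dest: eventually_happens)
    then show "x \<in> (\<Union>n. {x. S n < \<rho> x})" by auto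
  qed
  finally show "(\<lambda>n. emeasure lborel {x. S n < \<rho> x}) \<longlonglongrightarrow> emeasure lborel {x. t < \<rho> x}" .
qed simp

lemma emeas_left_gt: assumes "0 < t"
  shows "((\<lambda>u. emeasure lborel {x. u < \<rho> x}) \<longlongrightarrow> emeasure lborel {x. t \<le> \<rho> x}) (at_left t)"
proof (rule tendsto_at_left_sequentially[of "t / 2" t])
  fix S :: "nat \<Rightarrow> real" assume S: "\<And>n. S n < t" "\<And>n. t / 2 < S n" "incseq S" "S \<longlonglongrightarrow> t"
  have Spos: "0 < S n" for n using S(2)[of n] assms by linarith
  have "(\<lambda>n. emeasure lborel {x. S n < \<rho> x}) \<longlonglongrightarrow> emeasure lborel (\<Inter>n. {x. S n < \<rho> x})"
    using S(3) fin_gt[OF Spos]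
    by (intro Lim_emeasure_decseq) (auto simp: incseq_def decseq_def less_top intro: le_less_trans)
  also have "(\<Inter>n. {x. S n < \<rho> x}) = {x. t \<le> \<rho> x}"
  proof (intro equalityI subsetI)
    fix x assume "x \<in> (\<Inter>n. {x. S n < \<rho> x})"
    then have "\<forall>n. S n \<le> \<rho> x" using less_imp_le by auto
    then show "x \<in> {x. t \<le> \<rho> x}" using S(4) LIMSEQ_le_const2[of S t "\<rho> x"] by auto
  next
    fix x assume "x \<in> {x. t \<le> \<rho> x}" then show "x \<in> (\<Inter>n. {x. S n < \<rho> x})"
      using S(1) by (auto intro: less_le_trans)
  qed
  finally show "(\<lambda>n. emeasure lborel {x. S n < \<rho> x}) \<longlonglongrightarrow> emeasure lborel {x. t \<le> \<rho> x}" .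
qed (use assms in simp)

lemma g_ennreal: "0 < t \<Longrightarrow> emeasure lborel {x. t < \<rho> x} = ennreal (g t)"
  unfolding g_def using fin_gt by (intro emeasure_eq_ennreal_measure) (auto simp: less_top)

lemma G_ennreal: "0 < t \<Longrightarrow> emeasure lborel {x. t \<le> \<rho> x} = ennreal (G t)"
  unfolding G_def using fin_ge by (intro emeasure_eq_ennreal_measure) (auto simp: less_top)

lemma gfun: "g = (\<lambda>u. enn2real (emeasure lborel {x. u < \<rho> x}))"
  by (simp add: fun_eq_iff g_def measure_def)

lemma Gfun: "G = (\<lambda>u. enn2real (emeasure lborel {x. u \<le> \<rho> x}))"
  by (simp add: fun_eq_iff G_def measure_def)

lemma G_right: assumes "0 < t" shows "(G \<longlongrightarrow> g t) (at_right t)"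
proof -
  have "((\<lambda>u. emeasure lborel {x. u \<le> \<rho> x}) \<longlongrightarrow> ennreal (g t)) (at_right t)"
    using emeas_right_ge[of t] g_ennreal[OF assms] assms by simp
  then have "((\<lambda>u. enn2real (emeasure lborel {x. u \<le> \<rho> x})) \<longlongrightarrow> g t) (at_right t)"
    by (rule tendsto_enn2real) (simp add: g_def)
  then show ?thesis by (simp only: Gfun)
qed

lemma g_right: assumes "0 < t" shows "(g \<longlongrightarrow> g t) (at_right t)"
proof -
  have "((\<lambda>u. emeasure lborel {x. u < \<rho> x}) \<longlongrightarrow> ennreal (g t)) (at_right t)"
    using emeas_right_gt[of t] g_ennreal[OF assms] assms by simp
  then have "((\<lambda>u. enn2real (emeasure lborel {x. u < \<rho> x})) \<longlongrightarrow> g t) (at_right t)"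
    by (rule tendsto_enn2real) (simp add: g_def)
  then show ?thesis by (simp only: gfun)
qed

lemma g_left: assumes "0 < t" shows "(g \<longlongrightarrow> G t) (at_left t)"
proof -
  have "((\<lambda>u. emeasure lborel {x. u < \<rho> x}) \<longlongrightarrow> ennreal (G t)) (at_left t)"
    using emeas_left_gt[of t] G_ennreal[OF assms] assms by simp
  then have "((\<lambda>u. enn2real (emeasure lborel {x. u < \<rho> x})) \<longlongrightarrow> G t) (at_left t)"
    by (rule tendsto_enn2real) (simp add: G_def)
  then show ?thesis by (simp only: gfun)
qed

lemma h_at_right: assumes "0 < s" "s < 1" shows "filterlim h (at_right (h s)) (at_right s)"
proof -
  have "(h \<longlongrightarrow> h s) (at_right s)"
    using h_isCont[OF assms] by (simp add: isCont_def filterlim_at_split)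
  moreover have "eventually (\<lambda>x. h x \<in> {h s<..} \<and> h x \<noteq> h s) (at_right s)"
    using eventually_at_right_real[OF assms(2)]
  proof (rule eventually_mono)
    fix x assume "x \<in> {s<..<1}"
    then have "h s < h x" using h_strict[of s x] assms by auto
    then show "h x \<in> {h s<..} \<and> h x \<noteq> h s" by auto
  qed
  ultimately show ?thesis by (simp add: filterlim_at)
qed

lemma h_at_left: assumes "0 < s" "s < 1" shows "filterlim h (at_left (h s)) (at_left s)"
proof -
  have "(h \<longlongrightarrow> h s) (at_left s)"
    using h_isCont[OF assms] by (simp add: isCont_def filterlim_at_split)
  moreover have "eventually (\<lambda>x. h x \<in> {..<h s} \<and> h x \<noteq> h s) (at_left s)"
    using eventually_at_left_real[OF assms(1)]
  proof (rule eventually_mono)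
    fix x assume "x \<in> {0<..<s}"
    then have "h x < h s" using h_strict[of x s] assms by auto
    then show "h x \<in> {..<h s} \<and> h x \<noteq> h s" by auto
  qed
  ultimately show ?thesis by (simp add: filterlim_at)
qed

lemma h_right_deriv: assumes "0 < s" "s < 1"
  shows "((\<lambda>y. (h y - h s) / (y - s)) \<longlongrightarrow> 1 / g (h s)) (at_right s)"
proof -
  have r: "0 < h s" "h s < M" using h_range assms by auto
  have "((\<lambda>y. G (h y)) \<longlongrightarrow> g (h s)) (at_right s)"
    using G_right[OF r(1)] h_at_right[OF assms] by (rule filterlim_compose)
  then have lim: "((\<lambda>y. 1 / G (h y)) \<longlongrightarrow> 1 / g (h s)) (at_right s)"
    using g_pos[OF r] by (intro tendsto_divide tendsto_const) auto
  have ev: "eventually (\<lambda>y. y \<in> {s<..<1}) (at_right s)"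
    using eventually_at_right_real[OF assms(2)] by simp
  have lo: "eventually (\<lambda>y. 1 / g (h s) \<le> (h y - h s) / (y - s)) (at_right s)"
    using ev
  proof eventually_elim
    case (elim y)
    then have "(y - s) / g (h s) \<le> h y - h s" using h_slope(1)[of s y] assms by auto
    then show ?case using elim by (simp add: pos_le_divide_eq)
  qed
  have up: "eventually (\<lambda>y. (h y - h s) / (y - s) \<le> 1 / G (h y)) (at_right s)"
    using ev
  proof eventually_elim
    case (elim y)
    then have "h y - h s \<le> (y - s) / G (h y)" using h_slope(2)[of s y] assms by auto
    moreover have "0 < G (h y)" using h_range[of y] elim assms by (intro G_pos) auto
    ultimately show ?case using elim by (simp add: pos_divide_le_eq)
  qed
  show ?thesis by (rule tendsto_sandwich[OF lo up tendsto_const lim])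
qed

lemma h_left_deriv: assumes "0 < s" "s < 1"
  shows "((\<lambda>y. (h y - h s) / (y - s)) \<longlongrightarrow> 1 / G (h s)) (at_left s)"
proof -
  have r: "0 < h s" "h s < M" using h_range assms by auto
  have "((\<lambda>y. g (h y)) \<longlongrightarrow> G (h s)) (at_left s)"
    using g_left[OF r(1)] h_at_left[OF assms] by (rule filterlim_compose)
  then have lim: "((\<lambda>y. 1 / g (h y)) \<longlongrightarrow> 1 / G (h s)) (at_left s)"
    using G_pos[OF r] by (intro tendsto_divide tendsto_const) auto
  have ev: "eventually (\<lambda>y. y \<in> {0<..<s}) (at_left s)"
    using eventually_at_left_real[OF assms(1)] by simp
  have eq: "(h y - h s) / (y - s) = (h s - h y) / (s - y)" for y
    by (metis minus_diff_eq minus_divide_divide)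
  have lo: "eventually (\<lambda>y. 1 / g (h y) \<le> (h y - h s) / (y - s)) (at_left s)"
    using ev
  proof eventually_elim
    case (elim y)
    then have "(s - y) / g (h y) \<le> h s - h y" using h_slope(1)[of y s] assms by auto
    moreover have "0 < g (h y)" using h_range[of y] elim assms by (intro g_pos) auto
    ultimately show ?case using elim unfolding eq by (simp add: pos_le_divide_eq)
  qed
  have up: "eventually (\<lambda>y. (h y - h s) / (y - s) \<le> 1 / G (h s)) (at_left s)"
    using ev
  proof eventually_elim
    case (elim y)
    then have "h s - h y \<le> (s - y) / G (h s)" using h_slope(2)[of y s] assms by auto
    then show ?case using elim G_pos[OF r] unfolding eq by (simp add: pos_divide_le_eq)
  qed
  show ?thesis by (rule tendsto_sandwich[OF lo up lim tendsto_const])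
qed

lemma h_deriv: assumes "0 < s" "s < 1" "G (h s) = g (h s)"
  shows "(h has_real_derivative 1 / g (h s)) (at s)"
  unfolding has_field_derivative_iff filterlim_at_split
  using h_right_deriv[OF assms(1,2)] h_left_deriv[OF assms(1,2)] assms(3) by simp

definition "C = {s \<in> {0<..<1}. G (h s) \<noteq> g (h s)}"

lemma h_inj: "inj_on h {0<..<1}"
proof (rule inj_onI)
  fix x y assume xy: "x \<in> {0<..<1}" "y \<in> {0<..<1}" "h x = h y"
  show "x = y"
  proof (rule ccontr)
    assume "x \<noteq> y"
    then consider "x < y" | "y < x" by linarith
    then show False using h_strict[of x y] h_strict[of y x] xy by (cases) auto
  qed
qed

lemma h_strict_mono: "strict_mono_on {0<..<1} h"
  by (rule strict_mono_onI) (use h_strict in auto)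

lemma C_countable: "countable C"
proof -
  define T where "T = {t \<in> {0<..}. \<not> isCont (\<lambda>t. - G t) t}"
  have "mono_on {0<..} (\<lambda>t. - G t)"
    by (rule mono_onI) (use G_anti in auto)
  then have cT: "countable T" unfolding T_def by (intro mono_on_ctble_discont_open) auto
  have sub: "h ` C \<subseteq> T"
  proof
    fix t assume "t \<in> h ` C"
    then obtain s where s: "s \<in> {0<..<1}" "G (h s) \<noteq> g (h s)" "t = h s" by (auto simp: C_def)
    then have t: "0 < t" using h_range by auto
    have "\<not> isCont (\<lambda>t. - G t) t"
    proof
      assume "isCont (\<lambda>t. - G t) t"
      then have "isCont (\<lambda>t. - (- G t)) t" by (rule continuous_minus)
      then have "isCont G t" by simp
      then have "(G \<longlongrightarrow> G t) (at_right t)"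
        by (simp add: isCont_def filterlim_at_split)
      moreover have "(G \<longlongrightarrow> g t) (at_right t)" using G_right[OF t] .
      ultimately have "G t = g t" by (intro tendsto_unique[of "at_right t"]) auto
      then show False using s by simp
    qed
    then show "t \<in> T" using t by (simp add: T_def)
  qed
  have "countable (h ` C)" using countable_subset[OF sub cT] .
  moreover have "inj_on h C" using h_inj by (rule inj_on_subset) (auto simp: C_def)
  ultimately show ?thesis by (rule countable_image_inj_on)
qed

lemma h_deriv_C: "s \<in> {0<..<1} \<Longrightarrow> s \<notin> C \<Longrightarrow> (h has_real_derivative 1 / g (h s)) (at s)"
  by (intro h_deriv) (auto simp: C_def)

lemma AE_deriv: "AE s in lborel. s \<in> {0<..<1} \<longrightarrow> (h has_real_derivative (1 / measure lborel {x. h s < \<rho> x})) (at s)"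
proof (rule AE_I'[OF countable_imp_null_set_lborel[OF C_countable]])
  show "{s \<in> space lborel. \<not> (s \<in> {0<..<1} \<longrightarrow> (h has_real_derivative 1 / measure lborel {x. h s < \<rho> x}) (at s))} \<subseteq> C"
    using h_deriv_C by (auto simp: g_def)
qed

lemma deriv_h: assumes "s \<in> {0<..<1}" "h differentiable (at s)" shows "deriv h s = 1 / g (h s)"
proof -
  have "(h has_real_derivative deriv h s) (at s)"
    using assms(2) by (simp add: DERIV_deriv_iff_real_differentiable)
  then have "((\<lambda>y. (h y - h s) / (y - s)) \<longlongrightarrow> deriv h s) (at s)"
    by (simp add: has_field_derivative_iff)
  then have "((\<lambda>y. (h y - h s) / (y - s)) \<longlongrightarrow> deriv h s) (at_right s)"
    by (simp add: filterlim_at_split)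
  moreover have "((\<lambda>y. (h y - h s) / (y - s)) \<longlongrightarrow> 1 / g (h s)) (at_right s)"
    using h_right_deriv assms(1) by auto
  ultimately show ?thesis by (intro tendsto_unique[of "at_right s"]) auto
qed

lemma level_dc: "x \<in> {x. t < \<rho> x} \<Longrightarrow> norm y \<le> norm x \<Longrightarrow> y \<in> {x. t < \<rho> x}"
  using rad[of y x] by auto

lemma level_ball: assumes "0 < t" "t < M"
  obtains R where "0 < R" "ball 0 R \<subseteq> {x. t < \<rho> x}" "{x. t < \<rho> x} \<subseteq> cball 0 R"
    "g t = Ball_Volume.unit_ball_vol (real DIM('a)) * R ^ DIM('a)"
proof -
  have fin: "emeasure lborel {x. t < \<rho> x} < \<infinity>" using fin_gt assms by auto
  have "{x. t < \<rho> x} \<noteq> UNIV" using fin by (auto)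
  then obtain R where R: "0 \<le> R" "ball 0 R \<subseteq> {x. t < \<rho> x}" "{x. t < \<rho> x} \<subseteq> cball 0 R"
    using radial_set[of "{x. t < \<rho> x}"] level_dc by blast
  have e: "emeasure lborel {x. t < \<rho> x} = ennreal (Ball_Volume.unit_ball_vol (real DIM('a)) * R ^ DIM('a))"
    using radial_measure[OF R(2,3) _ R(1)] by simp
  then have gt: "g t = Ball_Volume.unit_ball_vol (real DIM('a)) * R ^ DIM('a)" unfolding g_def measure_def using R(1) by simp
  have "R \<noteq> 0"
  proof
    assume "R = 0"
    then have "g t = 0" using gt by simp
    then show False using g_pos[OF assms] by simp
  qed
  then have "0 < R" using R(1) by simp
  then show ?thesis using that[of R] R gt by blast
qed

lemma fsupp_facts:
  "emeasure lborel (fsupp \<rho>) = emeasure lborel {x. 0 < \<rho> x}"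
  "compact (fsupp \<rho>) \<longleftrightarrow> emeasure lborel {x. 0 < \<rho> x} < \<infinity>"
  "0 < emeasure lborel {x. 0 < \<rho> x}"
proof -
  let ?P = "{x. 0 < \<rho> x}"
  have fs: "fsupp \<rho> = closure ?P"
  proof -
    have "{x. \<rho> x \<noteq> 0} = ?P" using nn by (force simp: less_le)
    then show ?thesis unfolding fsupp_def by simp
  qed
  show pos: "0 < emeasure lborel ?P" using pos_meas M_pos by simp
  from radial_set[of ?P] level_dc
  consider "?P = UNIV" | R where "0 \<le> R" "ball 0 R \<subseteq> ?P" "?P \<subseteq> cball 0 R" by blast
  then have "emeasure lborel (fsupp \<rho>) = emeasure lborel ?P \<and> (compact (fsupp \<rho>) \<longleftrightarrow> emeasure lborel ?P < \<infinity>)"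
  proof cases
    case 1
    then have "fsupp \<rho> = UNIV" using fs by simp
    then show ?thesis using 1 compact_imp_bounded not_bounded_UNIV by auto
  next
    case (2 R)
    have "R \<noteq> 0"
    proof
      assume "R = 0"
      then have "?P \<subseteq> {0}" using 2 by auto
      then have "emeasure lborel ?P \<le> emeasure lborel {0::'a}" by (intro emeasure_mono) auto
      then show False using pos by simp
    qed
    then have Rp: "0 < R" using 2 by simp
    have "closure ?P = cball 0 R"
    proof
      show "closure ?P \<subseteq> cball 0 R" using 2 closure_minimal by blast
      show "cball 0 R \<subseteq> closure ?P" using closure_mono[OF 2(2)] closure_ball[OF Rp, of "0::'a"] by simp
    qed
    then have "fsupp \<rho> = cball 0 R" using fs by simp
    moreover have "emeasure lborel ?P = emeasure lborel (cball (0::'a) R)"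
      using radial_measure[OF 2(2,3) _ 2(1)] emeasure_cball[OF 2(1), of "0::'a"] by simp
    ultimately show ?thesis using emeasure_lborel_cball_finite[of "0::'a" R] by auto
  qed
  then show "emeasure lborel (fsupp \<rho>) = emeasure lborel ?P" "compact (fsupp \<rho>) \<longleftrightarrow> emeasure lborel ?P < \<infinity>"
    by auto
qed

lemma h_at0: "filterlim h (at_right 0) (at_right 0)"
proof -
  have ev: "eventually (\<lambda>s. s \<in> {0<..<1}) (at_right (0::real))"
    using eventually_at_right_real[of 0 1] by simp
  have "(h \<longlongrightarrow> 0) (at_right 0)"
  proof (rule order_tendstoI)
    fix a :: real assume "a < 0"
    show "eventually (\<lambda>s. a < h s) (at_right 0)"
      using ev by (rule eventually_mono) (use h_range \<open>a < 0\<close> in force)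
  next
    fix a :: real assume a: "0 < a"
    define t0 where "t0 = min a M / 2"
    have t0: "0 < t0" "t0 < M" "t0 < a" using a M_pos by (auto simp: t0_def)
    define s0 where "s0 = F t0"
    have s0: "0 < s0" "s0 < 1" "h s0 = t0" using F_range[OF t0(1,2)] hF[OF t0(1,2)] by (auto simp: s0_def)
    show "eventually (\<lambda>s. h s < a) (at_right 0)"
      using eventually_at_right_real[OF s0(1)]
    proof (rule eventually_mono)
      fix s assume "s \<in> {0<..<s0}"
      then have "h s < h s0" using h_strict[of s s0] s0 by auto
      then show "h s < a" using s0 t0 by simp
    qed
  qed
  moreover have "eventually (\<lambda>s. h s \<in> {0<..} \<and> h s \<noteq> 0) (at_right 0)"
    using ev by (rule eventually_mono) (use h_range in force)
  ultimately show ?thesis by (simp add: filterlim_at)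
qed

lemma lim_g0:
  "((\<lambda>u. 1 / g u) \<longlongrightarrow> (if emeasure lborel (fsupp \<rho>) = \<infinity> then 0 else 1 / measure lborel (fsupp \<rho>))) (at_right 0)"
proof -
  define L where "L = (if emeasure lborel (fsupp \<rho>) = \<infinity> then 0 else 1 / measure lborel (fsupp \<rho>))"
  have Lsub: "?thesis \<longleftrightarrow> ((\<lambda>u. 1 / g u) \<longlongrightarrow> L) (at_right 0)" by (simp add: L_def)
  let ?P = "{x. 0 < \<rho> x}"
  have lim: "((\<lambda>u. emeasure lborel {x. u < \<rho> x}) \<longlongrightarrow> emeasure lborel ?P) (at_right 0)"
    using emeas_right_gt[of 0] by simp
  have evp: "eventually (\<lambda>u. 0 < u) (at_right (0::real))"
    by (simp add: eventually_at_right_less)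
  show ?thesis
  proof (cases "emeasure lborel ?P = \<infinity>")
    case True
    then have L: "L = 0" using fsupp_facts(1) by (simp add: L_def)
    have "filterlim g at_top (at_right 0)"
      unfolding filterlim_at_top
    proof
      fix Z :: real
      have "eventually (\<lambda>u. ennreal (max Z 0) < emeasure lborel {x. u < \<rho> x}) (at_right 0)"
        using lim True by (intro order_tendstoD(1)) auto
      then show "eventually (\<lambda>u. Z \<le> g u) (at_right 0)"
        using evp
      proof eventually_elim
        case (elim u)
        then have "ennreal (max Z 0) < ennreal (g u)" using g_ennreal by simp
        then show ?case by (simp add: ennreal_less_iff)
      qed
    qed
    then have "((\<lambda>u. inverse (g u)) \<longlongrightarrow> 0) (at_right 0)" by (rule tendsto_inverse_0_at_top)
    then show ?thesis using L Lsub by (simp add: inverse_eq_divide)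
  next
    case False
    define m where "m = measure lborel ?P"
    have em: "emeasure lborel ?P = ennreal m" using False by (simp add: m_def emeasure_eq_ennreal_measure)
    have mpos: "0 < m" using fsupp_facts(3) em by (simp add: m_def)
    have L: "L = 1 / m" using fsupp_facts(1) False
      by (simp add: L_def m_def measure_def)
    have "((\<lambda>u. enn2real (emeasure lborel {x. u < \<rho> x})) \<longlongrightarrow> m) (at_right 0)"
      using lim em by (intro tendsto_enn2real) (auto simp: m_def)
    then have "(g \<longlongrightarrow> m) (at_right 0)" by (simp only: gfun)
    then show ?thesis using L mpos Lsub by (auto intro!: tendsto_divide tendsto_const)
  qed
qed

lemma part_b:
  "let L = (if emeasure lborel (fsupp \<rho>) = \<infinity> then 0 else 1 / measure lborel (fsupp \<rho>))
   in ((deriv h \<longlongrightarrow> L) (at 0 within {s\<in>{0<..<1}. h differentiable (at s)})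
       \<and> (compact (fsupp \<rho>) \<longleftrightarrow> L > 0))"
proof -
  define L where "L = (if emeasure lborel (fsupp \<rho>) = \<infinity> then 0 else 1 / measure lborel (fsupp \<rho>))"
  define D where "D = {s\<in>{0<..<1}. h differentiable (at s)}"
  have "((\<lambda>s. 1 / g (h s)) \<longlongrightarrow> L) (at_right 0)"
    using lim_g0 h_at0 unfolding L_def by (rule filterlim_compose)
  then have "((\<lambda>s. 1 / g (h s)) \<longlongrightarrow> L) (at 0 within D)"
    by (rule tendsto_mono[rotated]) (intro at_le, auto simp: D_def)
  moreover have "eventually (\<lambda>s. 1 / g (h s) = deriv h s) (at 0 within D)"
    unfolding eventually_at_filter by (intro always_eventually) (auto simp: D_def deriv_h)
  ultimately have 1: "(deriv h \<longlongrightarrow> L) (at 0 within D)" by (rule Lim_transform_eventually)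
  have 2: "compact (fsupp \<rho>) \<longleftrightarrow> L > 0"
  proof (cases "emeasure lborel {x. 0 < \<rho> x} = \<infinity>")
    case True then show ?thesis using fsupp_facts by (simp add: L_def)
  next
    case False
    then have "0 < measure lborel {x. 0 < \<rho> x}"
      using fsupp_facts(3) by (simp add: measure_def enn2real_positive_iff less_top)
    then show ?thesis using fsupp_facts False by (simp add: L_def measure_def less_top)
  qed
  show ?thesis using 1 2 unfolding L_def D_def Let_def by simp
qed

lemma sphere_null: "sphere (0::'a) r \<in> null_sets lborel"
  using negligible_sphere[of "0::'a" r]
  by (auto simp: null_sets_completion_iff negligible_iff_null_sets negligible_convex_frontier)

lemma above_M_null: "{x. M < \<rho> x} \<in> null_sets lborel"
proof -
  have "AE x in lborel. \<rho> x \<le> M" by (rule AE_le)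
  then show ?thesis by (subst (asm) AE_iff_null) (auto simp: not_le)
qed

lemma h_at1: "filterlim h (at_left M) (at_left 1)"
proof -
  have ev: "eventually (\<lambda>s. s \<in> {0<..<1}) (at_left (1::real))"
    using eventually_at_left_real[of 0 1] by simp
  have "(h \<longlongrightarrow> M) (at_left 1)"
  proof (rule order_tendstoI)
    fix a :: real assume "M < a"
    show "eventually (\<lambda>s. h s < a) (at_left 1)"
      using ev by (rule eventually_mono) (use h_range \<open>M < a\<close> in force)
  next
    fix a :: real assume a: "a < M"
    define t0 where "t0 = max a (M / 2)"
    have t0: "0 < t0" "t0 < M" "a \<le> t0" using a M_pos by (auto simp: t0_def)
    define s0 where "s0 = F t0"
    have s0: "0 < s0" "s0 < 1" "h s0 = t0" using F_range[OF t0(1,2)] hF[OF t0(1,2)] by (auto simp: s0_def)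
    show "eventually (\<lambda>s. a < h s) (at_left 1)"
      using eventually_at_left_real[OF s0(2)]
    proof (rule eventually_mono)
      fix s assume "s \<in> {s0<..<1}"
      then have "h s0 < h s" using h_strict[of s0 s] s0 by auto
      then show "a < h s" using s0 t0 by simp
    qed
  qed
  moreover have "eventually (\<lambda>s. h s \<in> {..<M} \<and> h s \<noteq> M) (at_left 1)"
    using ev by (rule eventually_mono) (use h_range in force)
  ultimately show ?thesis by (simp add: filterlim_at)
qed

definition "Rad s = (g (h s) / Ball_Volume.unit_ball_vol (real DIM('a))) powr (1 / real DIM('a))"

lemma Rad_ball: assumes "0 < s" "s < 1"
  shows "ball 0 (Rad s) \<subseteq> {x. h s < \<rho> x}" "{x. h s < \<rho> x} \<subseteq> cball 0 (Rad s)" "0 < Rad s"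
proof -
  have r: "0 < h s" "h s < M" using h_range assms by auto
  obtain R where R: "0 < R" "ball 0 R \<subseteq> {x. h s < \<rho> x}" "{x. h s < \<rho> x} \<subseteq> cball 0 R"
    "g (h s) = Ball_Volume.unit_ball_vol (real DIM('a)) * R ^ DIM('a)"
    using level_ball[OF r] by blast
  have "Rad s = (R ^ DIM('a)) powr (1 / real DIM('a))"
  proof -
    have V: "Ball_Volume.unit_ball_vol (real DIM('a)) \<noteq> 0"
      using R(4) g_pos[OF r] by auto
    have "g (h s) / Ball_Volume.unit_ball_vol (real DIM('a)) = R ^ DIM('a)" using R(4) V by simp
    then show ?thesis by (simp add: Rad_def)
  qed
  also have "\<dots> = (R powr real DIM('a)) powr (1 / real DIM('a))"
    using R(1) by (simp add: powr_realpow)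
  also have "\<dots> = R" using R(1) by (simp add: powr_powr)
  finally have "Rad s = R" .
  then show "ball 0 (Rad s) \<subseteq> {x. h s < \<rho> x}" "{x. h s < \<rho> x} \<subseteq> cball 0 (Rad s)" "0 < Rad s"
    using R by auto
qed

lemma Rad_anti: assumes "0 < s1" "s1 \<le> s2" "s2 < 1" shows "Rad s2 \<le> Rad s1"
proof -
  have "g (h s2) \<le> g (h s1)" using g_anti h_mono h_range assms by auto
  then have "g (h s2) / Ball_Volume.unit_ball_vol (real DIM('a)) \<le> g (h s1) / Ball_Volume.unit_ball_vol (real DIM('a))"
    by (intro divide_right_mono) auto
  moreover have "0 \<le> g (h s2)" by (simp add: g_def)
  ultimately show ?thesis unfolding Rad_def by (intro powr_mono2) auto
qed

lemma ubvT: "unit_ball_vol TYPE('a) = Ball_Volume.unit_ball_vol (real DIM('a))"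
  unfolding unit_ball_vol_def measure_def using emeasure_ball[of 1 "0::'a"] by simp

lemma radius_eq: assumes "s \<in> {0<..<1}" "s \<notin> C"
  shows "deriv h s = 1 / g (h s)"
    "(unit_ball_vol TYPE('a) * deriv h s) powr (- 1 / real DIM('a)) = Rad s"
proof -
  show d: "deriv h s = 1 / g (h s)" using h_deriv_C[OF assms] by (rule DERIV_imp_deriv)
  have gp: "0 < g (h s)" using g_pos h_range assms by auto
  have V: "0 < Ball_Volume.unit_ball_vol (real DIM('a))" by simp
  have "(unit_ball_vol TYPE('a) * deriv h s) powr (- 1 / real DIM('a))
      = (Ball_Volume.unit_ball_vol (real DIM('a)) / g (h s)) powr (- (1 / real DIM('a)))"
    by (simp add: ubvT d)
  also have "\<dots> = inverse ((Ball_Volume.unit_ball_vol (real DIM('a)) / g (h s)) powr (1 / real DIM('a)))"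
    by (rule powr_minus)
  also have "\<dots> = (g (h s) / Ball_Volume.unit_ball_vol (real DIM('a))) powr (1 / real DIM('a))"
    using gp V by (simp add: powr_divide inverse_eq_divide)
  finally show "(unit_ball_vol TYPE('a) * deriv h s) powr (- 1 / real DIM('a)) = Rad s"
    by (simp add: Rad_def)
qed

lemma C_lebesgue: "C \<in> sets lebesgue" "C \<in> sets lborel"
  using countable_imp_null_set_lborel[OF C_countable] by auto

lemma h_image_A: assumes "0 \<le> \<rho> x" "\<rho> x \<le> M"
  shows "h ` {s \<in> {0<..<1}. h s < \<rho> x} = {0<..<\<rho> x}"
proof
  show "h ` {s \<in> {0<..<1}. h s < \<rho> x} \<subseteq> {0<..<\<rho> x}" using h_range by auto
  show "{0<..<\<rho> x} \<subseteq> h ` {s \<in> {0<..<1}. h s < \<rho> x}"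
  proof
    fix t assume t: "t \<in> {0<..<\<rho> x}"
    then have t': "0 < t" "t < M" using assms by auto
    then show "t \<in> h ` {s \<in> {0<..<1}. h s < \<rho> x}"
      using hF[OF t'] F_range[OF t'] t by (intro image_eqI[of _ _ "F t"]) auto
  qed
qed

lemma part_c_x:
  assumes x: "\<rho> x \<le> M" "\<forall>q\<in>\<rat> \<inter> {0<..<1}. norm x \<noteq> Rad q"
  shows "ennreal (\<rho> x) = (\<integral>\<^sup>+ s\<in>{0<..<1}. ennreal (indicator
               (ball 0 ((unit_ball_vol TYPE('a) * deriv h s) powr (- 1 / real DIM('a)))) x
               * deriv h s) \<partial>lborel)"
proof -
  define A where "A = {s \<in> {0<..<1}. h s < \<rho> x}"
  define S where "S = A - C"
  define k where "k s = 1 / g (h s)" for s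
  define Z where "Z = {s \<in> {0<..<1}. Rad s = norm x}"
  have Z: "countable Z"
  proof -
    have uniq: "a = b" if "a \<in> Z" "b \<in> Z" for a b
    proof (rule ccontr)
      assume "a \<noteq> b"
      then consider "a < b" | "b < a" by linarith
      then show False
      proof cases
        case 1
        obtain q where q: "q \<in> \<rat>" "a < q" "q < b" using Rats_dense_in_real[OF 1] by blast
        have "Rad b \<le> Rad q" "Rad q \<le> Rad a" using Rad_anti[of q b] Rad_anti[of a q] q that by (auto simp: Z_def)
        then have "Rad q = norm x" using that by (auto simp: Z_def)
        moreover have "q \<in> \<rat> \<inter> {0<..<1}" using q that by (auto simp: Z_def)
        then have "norm x \<noteq> Rad q" using x(2) by (rule bspec[rotated])
        ultimately show False by simp
      next
        case 2
        obtain q where q: "q \<in> \<rat>" "b < q" "q < a" using Rats_dense_in_real[OF 2] by blast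
        have "Rad a \<le> Rad q" "Rad q \<le> Rad b" using Rad_anti[of q a] Rad_anti[of b q] q that by (auto simp: Z_def)
        then have "Rad q = norm x" using that by (auto simp: Z_def)
        moreover have "q \<in> \<rat> \<inter> {0<..<1}" using q that by (auto simp: Z_def)
        then have "norm x \<noteq> Rad q" using x(2) by (rule bspec[rotated])
        ultimately show False by simp
      qed
    qed
    show ?thesis
    proof (cases "Z = {}")
      case False
      then obtain z where "z \<in> Z" by auto
      then have "Z \<subseteq> {z}" using uniq by auto
      then show ?thesis by (rule countable_subset) simp
    qed simp
  qed
  have AEs: "AE s in lborel. s \<notin> C \<union> Z"
    using countable_imp_null_set_lborel[of "C \<union> Z"] C_countable Z by (intro AE_not_in) auto
  have "(\<integral>\<^sup>+ s\<in>{0<..<1}. ennreal (indicator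
               (ball 0 ((unit_ball_vol TYPE('a) * deriv h s) powr (- 1 / real DIM('a)))) x
               * deriv h s) \<partial>lborel) = (\<integral>\<^sup>+ s. ennreal \<bar>k s\<bar> * indicator S s \<partial>lborel)"
  proof (rule nn_integral_cong_AE)
    show "AE s in lborel. ennreal (indicator
               (ball 0 ((unit_ball_vol TYPE('a) * deriv h s) powr (- 1 / real DIM('a)))) x
               * deriv h s) * indicator {0<..<1} s = ennreal \<bar>k s\<bar> * indicator S s"
      using AEs
    proof eventually_elim
      case (elim s)
      show ?case
      proof (cases "s \<in> {0<..<1}")
        case False
        then show ?thesis by (auto simp: S_def A_def indicator_def)
      next
        case True
        have sC: "s \<notin> C" "s \<notin> Z" using elim by auto
        have rb: "ball 0 (Rad s) \<subseteq> {x. h s < \<rho> x}" "{x. h s < \<rho> x} \<subseteq> cball 0 (Rad s)"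
          using Rad_ball True by auto
        have nx: "norm x \<noteq> Rad s" using sC True by (auto simp: Z_def)
        have iff: "x \<in> ball 0 (Rad s) \<longleftrightarrow> h s < \<rho> x"
        proof
          assume "x \<in> ball 0 (Rad s)" then show "h s < \<rho> x" using rb by auto
        next
          assume "h s < \<rho> x"
          then have "norm x \<le> Rad s" using rb by auto
          then show "x \<in> ball 0 (Rad s)" using nx by simp
        qed
        have kp: "0 < k s" using g_pos h_range True by (auto simp: k_def)
        show ?thesis using radius_eq[OF True sC(1)] iff True sC kp
          by (auto simp: S_def A_def k_def indicator_def)
      qed
    qed
  qed
  also have "\<dots> = ennreal (\<rho> x)"
  proof (rule nn_integral_has_integral_lebesgue')
    show "\<And>s. s \<in> S \<Longrightarrow> 0 \<le> \<bar>k s\<bar>" by simp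
    have openA: "open A"
    proof -
      have "open ({0<..<1} \<inter> h -` {..<\<rho> x})"
        by (rule continuous_open_preimage[OF h_cont]) auto
      moreover have "{0<..<1} \<inter> h -` {..<\<rho> x} = A" by (auto simp: A_def)
      ultimately show ?thesis by simp
    qed
    have "bounded A" by (rule bounded_subset[of "cbox 0 1"]) (auto simp: A_def)
    then have "A \<in> lmeasurable" using openA by (intro lmeasurable_open)
    then have Sleb: "S \<in> sets lebesgue" using C_lebesgue unfolding S_def by auto
    have der: "\<And>s. s \<in> S \<Longrightarrow> (h has_real_derivative k s) (at s within S)"
      using h_deriv_C by (auto simp: S_def A_def k_def intro: has_field_derivative_at_within)
    have inj: "inj_on h S" using h_inj by (rule inj_on_subset) (auto simp: S_def A_def)
    define N where "N = h ` (A \<inter> C)"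
    have cN: "countable N" unfolding N_def using C_countable by auto
    have NL: "N \<in> null_sets lborel" using countable_imp_null_set_lborel[OF cN] .
    have hS: "h ` S = {0<..<\<rho> x} - N"
    proof -
      have "h ` (A - A \<inter> C) = h ` A - h ` (A \<inter> C)"
        by (rule inj_on_image_set_diff[OF h_inj]) (auto simp: A_def)
      moreover have "A - A \<inter> C = S" by (auto simp: S_def)
      ultimately have "h ` S = h ` A - h ` (A \<inter> C)" by simp
      then show ?thesis using h_image_A[OF nn x(1)] by (simp add: N_def A_def)
    qed
    have Esets: "{0<..<\<rho> x} - N \<in> sets lborel" using NL by auto
    have Elm: "{0<..<\<rho> x} - N \<in> lmeasurable"
      by (rule fmeasurableI2[of "{0<..<\<rho> x}"]) (use Esets in \<open>auto intro: lmeasurable_open\<close>)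
    have "measure lebesgue ({0<..<\<rho> x} - N) = measure lborel ({0<..<\<rho> x} - N)"
      using Esets by simp
    also have "\<dots> = measure lborel {0<..<\<rho> x}" by (rule measure_Diff_null_set[OF _ NL]) simp
    also have "\<dots> = \<rho> x" using nn[of x] by simp
    finally have mE: "measure lebesgue ({0<..<\<rho> x} - N) = \<rho> x" .
    have rhs: "(\<lambda>_. 1::real) absolutely_integrable_on h ` S \<and> integral (h ` S) (\<lambda>_. 1::real) = \<rho> x"
      unfolding hS using Elm mE lmeasure_integral[OF Elm] by (auto intro: absolutely_integrable_on_const)
    have cov: "(\<lambda>s. \<bar>k s\<bar> * 1) absolutely_integrable_on S \<and> integral S (\<lambda>s. \<bar>k s\<bar> * 1) = \<rho> x"
      using iffD2[OF has_absolute_integral_change_of_variables_1'[OF Sleb der inj, of "\<lambda>_. 1" "\<rho> x"] rhs] .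
    have ai: "(\<lambda>s. \<bar>k s\<bar> * 1) absolutely_integrable_on S" using cov by (rule conjunct1)
    have iv: "integral S (\<lambda>s. \<bar>k s\<bar> * 1) = \<rho> x" using cov by (rule conjunct2)
    have "(\<lambda>s. \<bar>k s\<bar> * 1) integrable_on S" by (rule set_lebesgue_integral_eq_integral(1)[OF ai])
    then have "((\<lambda>s. \<bar>k s\<bar> * 1) has_integral \<rho> x) S" using integrable_integral iv by metis
    then show "((\<lambda>s. \<bar>k s\<bar>) has_integral \<rho> x) S" by simp
  qed
  finally show ?thesis by simp
qed

lemma part_c:
  "AE x in lborel. ennreal (\<rho> x) =
          (\<integral>\<^sup>+ s\<in>{0<..<1}. ennreal (indicator
               (ball 0 ((unit_ball_vol TYPE('a) * deriv h s) powr (- 1 / real DIM('a)))) x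
               * deriv h s) \<partial>lborel)"
proof -
  have "AE x in lborel. \<forall>q\<in>\<rat> \<inter> {0<..<1}. norm (x::'a) \<noteq> Rad q"
  proof (subst AE_ball_countable)
    show "countable (\<rat> \<inter> {0<..<1::real})" using countable_rat by auto
    show "\<forall>q\<in>\<rat> \<inter> {0<..<1}. AE x in lborel. norm (x::'a) \<noteq> Rad q"
    proof
      fix q show "AE x in lborel. norm (x::'a) \<noteq> Rad q"
        using AE_not_in[OF sphere_null[of "Rad q"]] by eventually_elim auto
    qed
  qed
  then show ?thesis using AE_le by eventually_elim (rule part_c_x)
qed

context
  assumes SD: "\<forall>x y. 0 < \<rho> y \<longrightarrow> norm x < norm y \<longrightarrow> \<rho> y < \<rho> x"
begin

lemma Gg_eq: assumes "0 < t" shows "G t = g t"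
proof -
  have "emeasure lborel {x. t \<le> \<rho> x} \<le> emeasure lborel {x. t < \<rho> x}"
  proof (cases "\<exists>x0. \<rho> x0 = t")
    case False
    then have "{x. t \<le> \<rho> x} = {x. t < \<rho> x}" by (auto simp: le_less)
    then show ?thesis by simp
  next
    case True
    then obtain x0 where x0: "\<rho> x0 = t" by blast
    have sub: "{x. t \<le> \<rho> x} \<subseteq> {x. t < \<rho> x} \<union> sphere 0 (norm x0)"
    proof
      fix y assume y: "y \<in> {x. t \<le> \<rho> x}"
      show "y \<in> {x. t < \<rho> x} \<union> sphere 0 (norm x0)"
      proof (cases "\<rho> y = t")
        case True
        have "\<not> norm x0 < norm y" using SD[rule_format, of y x0] x0 True assms by auto
        moreover have "\<not> norm y < norm x0" using SD[rule_format, of x0 y] x0 True assms by auto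
        ultimately show ?thesis by auto
      qed (use y in auto)
    qed
    have "emeasure lborel {x. t \<le> \<rho> x} \<le> emeasure lborel ({x. t < \<rho> x} \<union> sphere 0 (norm x0))"
      by (intro emeasure_mono[OF sub]) auto
    also have "\<dots> = emeasure lborel {x. t < \<rho> x}"
      using sphere_null by (intro emeasure_Un_null_set) auto
    finally show ?thesis .
  qed
  then have "G t \<le> g t" using G_ennreal[OF assms] g_ennreal[OF assms] by (simp add: g_def)
  then show ?thesis using g_le_G[OF assms] by simp
qed

lemma C_empty: "C = {}" using Gg_eq h_range by (auto simp: C_def)

lemma h_diff: "(s::real) \<in> {0<..<1} \<Longrightarrow> (h has_real_derivative 1 / g (h s)) (at s)"
  using h_deriv_C C_empty by auto

lemma deriv_h': "(s::real) \<in> {0<..<1} \<Longrightarrow> deriv h s = 1 / g (h s)"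
  using h_diff by (rule DERIV_imp_deriv)

lemma g_cont: assumes "0 < t" "t < M" shows "isCont g t"
proof -
  have "(g \<longlongrightarrow> g t) (at_left t)" using g_left[OF assms(1)] Gg_eq[OF assms(1)] by simp
  moreover have "(g \<longlongrightarrow> g t) (at_right t)" using g_right[OF assms(1)] .
  ultimately show ?thesis by (simp add: isCont_def filterlim_at_split)
qed

lemma part_d:
  "(\<forall>s\<in>{0<..<1::real}. h differentiable (at s)) \<and> continuous_on {0<..<1} (deriv h)
   \<and> filterlim (deriv h) at_top (at_left 1)"
proof (intro conjI ballI)
  fix s :: real assume "s \<in> {0<..<1}"
  then show "h differentiable (at s)" using h_diff real_differentiable_def by blast
next
  have "continuous_on {0<..<1} (\<lambda>s. 1 / g (h s))"
  proof (intro continuous_at_imp_continuous_on ballI)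
    fix s :: real assume s: "s \<in> {0<..<1}"
    then have r: "0 < h s" "h s < M" using h_range by auto
    have "isCont (\<lambda>s. g (h s)) s" using h_isCont[of s] s g_cont[OF r] by (auto intro: isCont_o2)
    then show "isCont (\<lambda>s. 1 / g (h s)) s" using g_pos[OF r] by (auto intro!: continuous_intros)
  qed
  then show "continuous_on {0<..<1} (deriv h)"
    by (rule continuous_on_cong[THEN iffD1, rotated 2]) (auto simp: deriv_h')
next
  have GM: "G M = 0"
  proof -
    have "{x. M \<le> \<rho> x} \<subseteq> {0}"
    proof
      fix y assume y: "y \<in> {x. M \<le> \<rho> x}"
      show "y \<in> {0}"
      proof (rule ccontr)
        assume "y \<notin> {0}"
        then have ny: "0 < norm y" by simp
        have "ball 0 (norm y) \<subseteq> {x. M < \<rho> x}"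
        proof
          fix x assume "x \<in> ball (0::'a) (norm y)"
          then have "norm x < norm y" by simp
          then have "\<rho> y < \<rho> x" using SD y M_pos by force
          then show "x \<in> {x. M < \<rho> x}" using y by simp
        qed
        then have "emeasure lborel (ball (0::'a) (norm y)) \<le> emeasure lborel {x. M < \<rho> x}"
          by (intro emeasure_mono) auto
        also have "\<dots> = 0" using above_M_null by auto
        finally have "emeasure lborel (ball (0::'a) (norm y)) = 0" by simp
        moreover have "0 < Ball_Volume.unit_ball_vol (real DIM('a)) * norm y ^ DIM('a)"
          using ny by simp
        ultimately show False using emeasure_ball[of "norm y" "0::'a"] ny by auto
      qed
    qed
    then have "emeasure lborel {x. M \<le> \<rho> x} = 0"
      by (metis (no_types, lifting) emeasure_lborel_countable countable_finite emeasure_mono finite.intros le_zero_eq sets_lborel borel_singleton sets.empty_sets)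
    then show ?thesis by (simp add: G_def measure_def)
  qed
  have ev1: "eventually (\<lambda>s. s \<in> {0<..<1}) (at_left (1::real))"
    using eventually_at_left_real[of 0 1] by simp
  have "((\<lambda>s. g (h s)) \<longlongrightarrow> 0) (at_left 1)"
    using g_left[OF M_pos] h_at1 GM by (metis filterlim_compose)
  moreover have "eventually (\<lambda>s. 0 < g (h s)) (at_left 1)"
    using ev1
  proof (rule eventually_mono)
    fix s :: real assume "s \<in> {0<..<1}"
    then show "0 < g (h s)" using g_pos h_range[of s] by auto
  qed
  ultimately have "filterlim (\<lambda>s. inverse (g (h s))) at_top (at_left 1)"
    by (rule filterlim_inverse_at_top)
  moreover have "eventually (\<lambda>s. inverse (g (h s)) = deriv h s) (at_left 1)"
    using ev1 by (rule eventually_mono) (simp add: deriv_h' inverse_eq_divide)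
  ultimately show "filterlim (deriv h) at_top (at_left 1)"
    by (rule filterlim_mono_eventually[OF _ order.refl order.refl])
qed

end

end

theorem lemma2p1:
  fixes \<rho> :: "'a::euclidean_space \<Rightarrow> real" and h :: "real \<Rightarrow> real"
  assumes dens: "prob_density \<rho>"
    and Linf: "Linf_norm \<rho> < \<infinity>"
    and rad: "radially_decreasing \<rho>"
    and height: "\<And>s. 0 < s \<Longrightarrow> s < 1 \<Longrightarrow> integral\<^sup>L lborel (\<lambda>x. min (\<rho> x) (h s)) = s"
  shows
    \<comment> \<open>(a)\<close>
    "(\<forall>s\<in>{0<..<1}. 0 < h s \<and> ereal (h s) < Linf_norm \<rho>)
     \<and> continuous_on {0<..<1} h
     \<and> strict_mono_on {0<..<1} h
     \<and> convex_on {0<..<1} h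
     \<and> (AE s in lborel. s \<in> {0<..<1} \<longrightarrow>
           (h has_real_derivative (1 / measure lborel {x. h s < \<rho> x})) (at s))
     \<comment> \<open>(b)\<close>
     \<and> (let L = (if emeasure lborel (fsupp \<rho>) = \<infinity> then 0
                  else 1 / measure lborel (fsupp \<rho>))
        in ((deriv h \<longlongrightarrow> L) (at 0 within {s\<in>{0<..<1}. h differentiable (at s)})
            \<and> (compact (fsupp \<rho>) \<longleftrightarrow> L > 0)))
     \<comment> \<open>(c)\<close>
     \<and> (AE x in lborel. ennreal (\<rho> x) =
          (\<integral>\<^sup>+ s\<in>{0<..<1}. ennreal (indicator
               (ball 0 ((unit_ball_vol TYPE('a) * deriv h s) powr (- 1 / real DIM('a)))) x
               * deriv h s) \<partial>lborel))
     \<comment> \<open>(d)\<close>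
     \<and> ((\<forall>x y. 0 < \<rho> y \<longrightarrow> norm x < norm y \<longrightarrow> \<rho> y < \<rho> x) \<longrightarrow>
          ((\<forall>s\<in>{0<..<1}. h differentiable (at s)) \<and> continuous_on {0<..<1} (deriv h)
           \<and> filterlim (deriv h) at_top (at_left 1)))"
proof -
  have nn: "\<And>x. 0 \<le> \<rho> x" using dens by (simp add: prob_density_def)
  have meas: "\<rho> \<in> borel_measurable lborel" using dens by (simp add: prob_density_def)
  define E where "E = esssup lborel (\<lambda>x. ereal (\<rho> x))"
  have LE: "Linf_norm \<rho> = E" unfolding Linf_norm_def E_def using nn by simp
  have "E \<noteq> -\<infinity>"
  proof
    assume "E = -\<infinity>"
    then have "AE x in (lborel::'a measure). False"
      using esssup_AE[of "\<lambda>x. ereal (\<rho> x)" lborel] by (simp add: E_def)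
    then show False by (simp add: eventually_False ae_filter_eq_bot_iff)
  qed
  moreover have "E \<noteq> \<infinity>" using Linf LE by simp
  ultimately obtain M where EM: "E = ereal M" by (cases E) auto
  interpret hsetup \<rho> h M
  proof
    show "\<rho> \<in> borel_measurable lborel" by (rule meas)
    show "\<And>x. 0 \<le> \<rho> x" by (rule nn)
    show "integrable lborel \<rho>" "integral\<^sup>L lborel \<rho> = 1" using dens by (auto simp: prob_density_def)
    show "esssup lborel (\<lambda>x. ereal (\<rho> x)) = ereal M" using EM by (simp add: E_def)
    show "\<And>x y. norm x \<le> norm y \<Longrightarrow> \<rho> y \<le> \<rho> x" using rad by (simp add: radially_decreasing_def)
    show "\<And>s. 0 < s \<Longrightarrow> s < 1 \<Longrightarrow> integral\<^sup>L lborel (\<lambda>x. min (\<rho> x) (h s)) = s" by (rule height)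
  qed
  have LM: "Linf_norm \<rho> = ereal M" using LE EM by simp
  have a1: "\<forall>s\<in>{0<..<1}. 0 < h s \<and> ereal (h s) < Linf_norm \<rho>"
    using h_range LM by auto
  show ?thesis
    using a1 h_cont h_strict_mono h_convex AE_deriv part_b part_c part_d by blast
qed

end
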